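(* Let $\mathbb P\in\mathcal P(\mathbb C)$, let $\tau$ be a finite $(\mathcal B_t)$-stopping time and let $(Q_\omega)_{\omega\in\mathbb C}$ be a regular conditional probability distribution of $\mathbb P$ with respect to $\mathcal B_\tau$. Let $(X_t)_{t\geq0}$ be a bounded continuous process on $\mathbb C$ and $A\in\mathbb R$ such that for every $t\geq0$, $\mathbb E^{\mathbb P}(X_t|\mathcal B_t)\leq A$ $\mathbb P$-a.s. Then there is a $\mathbb P$-null set $N\in\mathcal B_\tau$ such that for all $\omega\notin N$ and all $t\geq\tau(\omega)$, $\mathbb E^{Q_\omega}(X_t|\mathcal B_t)\leq A$ $Q_\omega$-a.s.
   Context: $\mathbb C=C(\mathbb R_+;\mathbb R^d)$ with the locally uniform metric, coordinate process $\omega_t$, $\mathcal B_t=\sigma(\omega_r:r\leq t)$, $\mathcal B=\bigvee_{t\geq0}\mathcal B_t$; $\mathcal P(\mathbb C)$ the probability measures on $(\mathbb C,\mathcal B)$. A regular conditional probability distribution of $\mathbb P$ w.r.t. $\mathcal B_\tau$ is a $\mathcal B_\tau$-measurable map $\omega\mapsto Q_\omega\in\mathcal P(\mathbb C)$ with $Q_\omega(\Gamma)=\mathbb P(\Gamma|\mathcal B_\tau)(\omega)$ for $\mathbb P$-a.e. $\omega$, for each $\Gamma\in\mathcal B$. *)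

theory Defs
  imports "HOL-Probability.Probability"
begin

text \<open>A path is represented as a function on all of real,
  continuous on [0,oo) and constant (equal to its value at 0) on the negative reals,
  so this set is in canonical bijection with C(R_+; R^d). R^d is an arbitrary
  Euclidean space 'a.\<close>
definition path_space :: "(real \<Rightarrow> 'a::euclidean_space) set" where
  "path_space = {\<omega>. continuous_on {0..} \<omega> \<and> (\<forall>t<0. \<omega> t = \<omega> 0)}"

text \<open>B_t = sigma(omega_r : r <= t) (coordinate filtration); for t < 0 it is trivial.\<close>
definition coord_filt :: "real \<Rightarrow> (real \<Rightarrow> 'a::euclidean_space) measure" where
  "coord_filt t = sigma path_space
     {(\<lambda>\<omega>. \<omega> r) -` U \<inter> path_space | r U. 0 \<le> r \<and> r \<le> t \<and> open U}"

definition path_sigma :: "(real \<Rightarrow> 'a::euclidean_space) measure" where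
  "path_sigma = sigma path_space
     {(\<lambda>\<omega>. \<omega> r) -` U \<inter> path_space | r U. 0 \<le> r \<and> open U}"

definition stopped_sigma :: "((real \<Rightarrow> 'a::euclidean_space) \<Rightarrow> real) \<Rightarrow> (real \<Rightarrow> 'a) measure" where
  "stopped_sigma \<tau> = sigma path_space
     {A \<in> sets path_sigma. \<forall>t\<ge>0. {\<omega> \<in> A. \<tau> \<omega> \<le> t} \<in> sets (coord_filt t)}"

end

theory Submission
  imports Defs
begin

lemma path_space_ne: "(\<lambda>_. 0) \<in> path_space"
  unfolding path_space_def by auto

lemma gen_coord_sub: "{(\<lambda>\<omega>. \<omega> r) -` U \<inter> path_space | r U. 0 \<le> r \<and> r \<le> t \<and> open U} \<subseteq> Pow path_space"
  by auto
lemma gen_path_sub: "{(\<lambda>\<omega>. \<omega> r) -` U \<inter> path_space | r U. 0 \<le> r \<and> open U} \<subseteq> Pow path_space"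
  by auto

lemma space_coord_filt[simp]: "space (coord_filt t) = path_space"
  unfolding coord_filt_def by (simp add: space_measure_of_conv)
lemma sets_coord_filt: "sets (coord_filt t) = sigma_sets path_space
     {(\<lambda>\<omega>. \<omega> r) -` U \<inter> path_space | r U. 0 \<le> r \<and> r \<le> t \<and> open U}"
  unfolding coord_filt_def by (rule sets_measure_of) auto
lemma space_path_sigma[simp]: "space path_sigma = path_space"
  unfolding path_sigma_def by (simp add: space_measure_of_conv)
lemma sets_path_sigma: "sets path_sigma = sigma_sets path_space
     {(\<lambda>\<omega>. \<omega> r) -` U \<inter> path_space | r U. 0 \<le> r \<and> open U}"
  unfolding path_sigma_def by (rule sets_measure_of) auto
lemma space_stopped[simp]: "space (stopped_sigma \<tau>) = path_space"
  unfolding stopped_sigma_def by (simp add: space_measure_of_conv)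
lemma sets_stopped: "sets (stopped_sigma \<tau>) = sigma_sets path_space
     {A \<in> sets path_sigma. \<forall>t\<ge>0. {\<omega> \<in> A. \<tau> \<omega> \<le> t} \<in> sets (coord_filt t)}"
  unfolding stopped_sigma_def
  by (rule sets_measure_of) (use sets.sets_into_space[of _ path_sigma] in auto)

lemma coord_filt_mono: "s \<le> t \<Longrightarrow> sets (coord_filt s) \<subseteq> sets (coord_filt t)"
  unfolding sets_coord_filt
  by (rule sigma_sets_mono') (use order_trans in blast)

lemma coord_filt_sub: "sets (coord_filt t) \<subseteq> sets path_sigma"
  unfolding sets_coord_filt sets_path_sigma
  by (rule sigma_sets_mono') blast

lemma stopped_sub: "sets (stopped_sigma \<tau>) \<subseteq> sets path_sigma"
  unfolding sets_stopped
  using sets.sigma_sets_subset[of "{A \<in> sets path_sigma. \<forall>t\<ge>0. {\<omega> \<in> A. \<tau> \<omega> \<le> t} \<in> sets (coord_filt t)}" path_sigma]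
  by auto

lemma stopped_prop:
  assumes st: "stopping_time coord_filt \<tau>" and B: "B \<in> sets (stopped_sigma \<tau>)"
  shows "\<forall>t\<ge>0. {\<omega> \<in> B. \<tau> \<omega> \<le> t} \<in> sets (coord_filt t)"
  using B unfolding sets_stopped
proof (induction rule: sigma_sets.induct)
  case (Basic a) then show ?case by auto
next
  case Empty then show ?case by auto
next
  case (Compl a)
  show ?case
  proof (intro allI impI)
    fix t :: real assume t: "0 \<le> t"
    have "{\<omega> \<in> path_space - a. \<tau> \<omega> \<le> t} = {\<omega> \<in> space (coord_filt t). \<tau> \<omega> \<le> t} - {\<omega> \<in> a. \<tau> \<omega> \<le> t}"
      by auto
    also have "\<dots> \<in> sets (coord_filt t)"
      using stopping_timeD[OF st, of t] Compl.IH t by (intro sets.Diff) (auto simp: pred_def)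
    finally show "{\<omega> \<in> path_space - a. \<tau> \<omega> \<le> t} \<in> sets (coord_filt t)" .
  qed
next
  case (Union a)
  show ?case
  proof (intro allI impI)
    fix t :: real assume t: "0 \<le> t"
    have "{\<omega> \<in> \<Union>(range a). \<tau> \<omega> \<le> t} = (\<Union>i. {\<omega> \<in> a i. \<tau> \<omega> \<le> t})" by auto
    also have "\<dots> \<in> sets (coord_filt t)"
      using Union.IH t by (intro sets.countable_UN) auto
    finally show "{\<omega> \<in> \<Union>(range a). \<tau> \<omega> \<le> t} \<in> sets (coord_filt t)" .
  qed
qed

lemma tau_le_stopped:
  assumes st: "stopping_time coord_filt \<tau>"
  shows "{\<omega> \<in> path_space. \<tau> \<omega> \<le> s} \<in> sets (stopped_sigma \<tau>)"
proof -
  have 1: "{\<omega> \<in> path_space. \<tau> \<omega> \<le> s} \<in> sets (coord_filt s)"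
    using stopping_timeD[OF st, of s] by (simp add: pred_def)
  have "{\<omega> \<in> path_space. \<tau> \<omega> \<le> s} \<in> sets path_sigma" using 1 coord_filt_sub by auto
  moreover have "\<forall>t\<ge>0. {\<omega> \<in> {\<omega> \<in> path_space. \<tau> \<omega> \<le> s}. \<tau> \<omega> \<le> t} \<in> sets (coord_filt t)"
  proof (intro allI impI)
    fix t :: real assume "0 \<le> t"
    have "{\<omega> \<in> {\<omega> \<in> path_space. \<tau> \<omega> \<le> s}. \<tau> \<omega> \<le> t} = {\<omega> \<in> space (coord_filt (min s t)). \<tau> \<omega> \<le> min s t}"
      by auto
    also have "\<dots> \<in> sets (coord_filt (min s t))" using stopping_timeD[OF st, of "min s t"] by (simp add: pred_def)
    also have "\<dots> \<subseteq> sets (coord_filt t)" by (rule coord_filt_mono) auto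
    finally show "{\<omega> \<in> {\<omega> \<in> path_space. \<tau> \<omega> \<le> s}. \<tau> \<omega> \<le> t} \<in> sets (coord_filt t)" .
  qed
  ultimately show ?thesis unfolding sets_stopped by (intro sigma_sets.Basic) auto
qed

lemma subalg_P:
  assumes "sets P = sets path_sigma" "sets F \<subseteq> sets path_sigma" "space F = path_space"
  shows "subalgebra P F"
  using assms sets_eq_imp_space_eq[OF assms(1)] unfolding subalgebra_def by auto

lemma fms:
  assumes "prob_space P" "subalgebra P F"
  shows "sigma_finite_subalgebra P F"
proof -
  have "finite_measure_subalgebra P F"
    unfolding finite_measure_subalgebra_def finite_measure_subalgebra_axioms_def
    using assms by (auto simp: prob_space_def)
  then show ?thesis by (rule finite_measure_subalgebra_is_sigma_finite)
qed

lemma Q_in: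
  assumes Q_meas: "Q \<in> stopped_sigma \<tau> \<rightarrow>\<^sub>M prob_algebra path_sigma" and "\<omega> \<in> path_space"
  shows "sets (Q \<omega>) = sets path_sigma" "prob_space (Q \<omega>)" "space (Q \<omega>) = path_space"
proof -
  have "Q \<omega> \<in> space (prob_algebra path_sigma)" using measurable_space[OF Q_meas] assms by auto
  then show "sets (Q \<omega>) = sets path_sigma" "prob_space (Q \<omega>)" by (auto simp: space_prob_algebra)
  then show "space (Q \<omega>) = path_space" using sets_eq_imp_space_eq[of "Q \<omega>" path_sigma] by simp
qed

lemma disint:
  assumes P_prob: "prob_space P" and P_sets: "sets P = sets path_sigma"
   and Q_meas: "Q \<in> stopped_sigma \<tau> \<rightarrow>\<^sub>M prob_algebra path_sigma"
   and Q_rcpd: "\<forall>\<Gamma>\<in>sets path_sigma. AE \<omega> in P.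
                   measure (Q \<omega>) \<Gamma> = real_cond_exp P (stopped_sigma \<tau>) (indicator \<Gamma>) \<omega>"
   and B: "B \<in> sets (stopped_sigma \<tau>)"
   and g: "g \<in> borel_measurable path_sigma"
  shows "(\<integral>\<^sup>+ \<omega>. indicator B \<omega> * (\<integral>\<^sup>+ y. g y \<partial>Q \<omega>) \<partial>P) = (\<integral>\<^sup>+ \<omega>. indicator B \<omega> * g \<omega> \<partial>P)"
proof -
  let ?St = "stopped_sigma \<tau>"
  have sub: "subalgebra P ?St" by (rule subalg_P[OF P_sets stopped_sub]) simp
  interpret sigma_finite_subalgebra P ?St by (rule fms[OF P_prob sub])
  interpret P: prob_space P by (rule P_prob)
  have spP: "space P = path_space" using sets_eq_imp_space_eq[OF P_sets] by simp
  define M' where "M' = density (restr_to_subalg P ?St) (indicator B)"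
  have sM': "sets M' = sets ?St" unfolding M'_def by (simp add: sets_restr_to_subalg[OF sub])
  have spM': "space M' = path_space" unfolding M'_def by (simp add: space_restr_to_subalg spP)
  have QS: "Q \<in> ?St \<rightarrow>\<^sub>M subprob_algebra path_sigma" by (rule measurable_prob_algebraD[OF Q_meas])
  have QM': "Q \<in> M' \<rightarrow>\<^sub>M subprob_algebra path_sigma"
    using QS measurable_cong_sets[OF sM' refl] by blast
  have ne: "space M' \<noteq> {}" using spM' path_space_ne by auto
  have Bm[measurable]: "B \<in> sets ?St" by (rule B)
  have BP0: "B \<in> sets P" using Bm stopped_sub[of \<tau>] P_sets by blast
  have eq: "bind M' Q = density P (indicator B)"
  proof (rule measure_eqI)
    show "sets (bind M' Q) = sets (density P (indicator B))"
      using sets_bind[OF _ ne, of Q path_sigma] Q_in[OF Q_meas] spM' P_sets by auto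
  next
    fix \<Gamma> assume "\<Gamma> \<in> sets (bind M' Q)"
    then have G: "\<Gamma> \<in> sets path_sigma" using sets_bind[OF _ ne, of Q path_sigma] Q_in[OF Q_meas] spM' by auto
    then have GP: "\<Gamma> \<in> sets P" using P_sets by simp
    define rce where "rce = real_cond_exp P ?St (indicator \<Gamma>)"
    have int1: "integrable P (\<lambda>x. indicator B x * indicator \<Gamma> x :: real)"
    proof (rule P.integrable_const_bound[where B=1])
      have BP: "B \<in> sets P" using Bm stopped_sub[of \<tau>] P_sets by blast
      show "(\<lambda>x. indicator B x * indicator \<Gamma> x :: real) \<in> borel_measurable P"
        by (intro borel_measurable_times borel_measurable_indicator BP GP)
    qed (auto split: split_indicator)
    have mB: "(indicator B :: _ \<Rightarrow> real) \<in> borel_measurable ?St" by simp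
    have mG: "(indicator \<Gamma> :: _ \<Rightarrow> real) \<in> borel_measurable P" using GP by simp
    have mE: "(\<lambda>x. emeasure (Q x) \<Gamma>) \<in> borel_measurable ?St"
      using measurable_emeasure_subprob_algebra[OF G] QS by (rule measurable_compose[rotated])
    have "emeasure (bind M' Q) \<Gamma> = (\<integral>\<^sup>+x. emeasure (Q x) \<Gamma> \<partial>M')"
      by (rule emeasure_bind[OF ne QM' G])
    also have "\<dots> = (\<integral>\<^sup>+x. indicator B x * emeasure (Q x) \<Gamma> \<partial>restr_to_subalg P ?St)"
      unfolding M'_def
      by (rule nn_integral_density) (auto intro: measurable_in_subalg[OF sub] mE)
    also have "\<dots> = (\<integral>\<^sup>+x. indicator B x * emeasure (Q x) \<Gamma> \<partial>P)"
      by (rule nn_integral_subalgebra2[OF sub]) (use mE in simp)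
    also have "\<dots> = (\<integral>\<^sup>+x. ennreal (indicator B x * rce x) \<partial>P)"
    proof (rule nn_integral_cong_AE)
      have "AE x in P. measure (Q x) \<Gamma> = rce x" using Q_rcpd G unfolding rce_def by auto
      moreover have "AE x in P. rce x \<ge> 0" unfolding rce_def
        by (rule real_cond_exp_pos) (use mG in auto)
      moreover have "AE x in P. x \<in> space P" by simp
      ultimately show "AE x in P. indicator B x * emeasure (Q x) \<Gamma> = ennreal (indicator B x * rce x)"
      proof eventually_elim
        case (elim x)
        have "x \<in> path_space" using elim spP by simp
        then interpret Qx: prob_space "Q x" using Q_in[OF Q_meas] by simp
        show ?case using elim by (auto simp: Qx.emeasure_eq_measure split: split_indicator)
      qed
    qed
    also have "\<dots> = ennreal (\<integral>x. indicator B x * rce x \<partial>P)"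
    proof (rule nn_integral_eq_integral)
      show "integrable P (\<lambda>x. indicator B x * rce x)"
        unfolding rce_def by (rule real_cond_exp_intg(1)[OF int1 mB mG])
      have "AE x in P. rce x \<ge> 0" unfolding rce_def
        by (rule real_cond_exp_pos) (use mG in auto)
      then show "AE x in P. 0 \<le> indicator B x * rce x" by eventually_elim (auto split: split_indicator)
    qed
    also have "\<dots> = ennreal (\<integral>x. indicator B x * indicator \<Gamma> x \<partial>P)"
      unfolding rce_def by (simp add: real_cond_exp_intg(2)[OF int1 mB mG])
    also have "\<dots> = (\<integral>\<^sup>+x. ennreal (indicator B x * indicator \<Gamma> x) \<partial>P)"
      by (rule nn_integral_eq_integral[symmetric]) (use int1 in auto)
    also have "\<dots> = emeasure (density P (indicator B)) \<Gamma>"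
      using GP BP0 by (subst emeasure_density) (auto intro!: nn_integral_cong split: split_indicator)
    finally show "emeasure (bind M' Q) \<Gamma> = emeasure (density P (indicator B)) \<Gamma>" .
  qed
  have gP: "g \<in> borel_measurable P" using g measurable_cong_sets[OF P_sets refl] by blast
  have mI: "(\<lambda>x. \<integral>\<^sup>+ y. g y \<partial>Q x) \<in> borel_measurable ?St"
    by (rule nn_integral_measurable_subprob_algebra[OF g, THEN measurable_compose[OF QS]])
  have "(\<integral>\<^sup>+ \<omega>. indicator B \<omega> * g \<omega> \<partial>P) = (\<integral>\<^sup>+ \<omega>. g \<omega> \<partial>density P (indicator B))"
    using BP0 by (subst nn_integral_density) (auto simp: gP)
  also have "\<dots> = (\<integral>\<^sup>+ \<omega>. g \<omega> \<partial>bind M' Q)" by (simp add: eq)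
  also have "\<dots> = (\<integral>\<^sup>+x. \<integral>\<^sup>+y. g y \<partial>Q x \<partial>M')" by (rule nn_integral_bind[OF g QM'])
  also have "\<dots> = (\<integral>\<^sup>+x. indicator B x * (\<integral>\<^sup>+y. g y \<partial>Q x) \<partial>restr_to_subalg P ?St)"
    unfolding M'_def by (rule nn_integral_density) (auto intro: measurable_in_subalg[OF sub] mI)
  also have "\<dots> = (\<integral>\<^sup>+x. indicator B x * (\<integral>\<^sup>+y. g y \<partial>Q x) \<partial>P)"
    by (rule nn_integral_subalgebra2[OF sub]) (use mI in simp)
  finally show ?thesis by simp
qed

lemma Z_props:
  fixes P :: "(real \<Rightarrow> 'a::euclidean_space) measure"
  assumes P_prob: "prob_space P" and P_sets: "sets P = sets path_sigma"
    and Xm: "X \<in> borel_measurable path_sigma"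
    and Xb: "\<forall>\<omega>\<in>path_space. \<bar>X \<omega>\<bar> \<le> K" and AK: "\<bar>A\<bar> \<le> K"
    and Xs: "AE \<omega> in P. real_cond_exp P (coord_filt s) X \<omega> \<le> A"
    and Zdef: "Z = (\<lambda>\<omega>. max (-K) (min A (real_cond_exp P (coord_filt s) X \<omega>)))"
  shows "Z \<in> borel_measurable (coord_filt s)" "\<And>\<omega>. -K \<le> Z \<omega> \<and> Z \<omega> \<le> A"
    "\<And>\<Gamma>. \<Gamma> \<in> sets (coord_filt s) \<Longrightarrow>
      (\<integral>\<^sup>+ \<omega>. ennreal (indicator \<Gamma> \<omega> * (X \<omega> + K)) \<partial>P) = (\<integral>\<^sup>+ \<omega>. ennreal (indicator \<Gamma> \<omega> * (Z \<omega> + K)) \<partial>P)"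
proof -
  let ?F = "coord_filt s :: (real \<Rightarrow> 'a) measure"
  let ?Y = "real_cond_exp P ?F X"
  have sub: "subalgebra P ?F" by (rule subalg_P[OF P_sets coord_filt_sub]) simp
  interpret sigma_finite_subalgebra P ?F by (rule fms[OF P_prob sub])
  interpret P: prob_space P by (rule P_prob)
  have spP: "space P = path_space" using sets_eq_imp_space_eq[OF P_sets] by simp
  have XP[measurable]: "X \<in> borel_measurable P" using Xm measurable_cong_sets[OF P_sets refl] by blast
  have intX: "integrable P X"
    by (rule P.integrable_const_bound[where B=K]) (use Xb spP in auto)
  show Zm: "Z \<in> borel_measurable ?F" unfolding Zdef by measurable
  show "\<And>\<omega>. -K \<le> Z \<omega> \<and> Z \<omega> \<le> A" using AK unfolding Zdef by auto
  have Zb: "\<And>\<omega>. \<bar>Z \<omega>\<bar> \<le> K" using AK unfolding Zdef by auto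
  have Zlow: "\<And>\<omega>. 0 \<le> Z \<omega> + K"
  proof -
    fix \<omega> show "0 \<le> Z \<omega> + K" using Zb[of \<omega>] by (auto simp: abs_le_iff)
  qed
  have ge: "AE \<omega> in P. ?Y \<omega> \<ge> -K"
    by (rule real_cond_exp_ge_c[OF intX], rule AE_I2) (use Xb spP abs_le_iff in force)
  have YZ: "AE \<omega> in P. ?Y \<omega> = Z \<omega>"
    using ge Xs by eventually_elim (auto simp: Zdef)
  have ZP[measurable]: "Z \<in> borel_measurable P" by (rule measurable_from_subalg[OF sub Zm])
  fix \<Gamma> assume G: "\<Gamma> \<in> sets ?F"
  then have GP[measurable]: "\<Gamma> \<in> sets P" using coord_filt_sub P_sets by blast
  have i1: "integrable P (\<lambda>\<omega>. indicator \<Gamma> \<omega> * X \<omega>)"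
    by (rule P.integrable_const_bound[where B=K]) (use Xb spP AK in \<open>auto split: split_indicator\<close>)
  have i2: "integrable P (\<lambda>\<omega>. indicator \<Gamma> \<omega> * Z \<omega>)"
    by (rule P.integrable_const_bound[where B=K])
       (use Zb ZP AK in \<open>auto split: split_indicator\<close>)
  have i3: "integrable P (\<lambda>\<omega>. indicator \<Gamma> \<omega> * K)"
    by (rule P.integrable_const_bound[where B="\<bar>K\<bar>"]) (auto split: split_indicator)
  have Gm: "(indicator \<Gamma> :: _ \<Rightarrow> real) \<in> borel_measurable ?F" using G by simp
  have "(\<integral>\<omega>. indicator \<Gamma> \<omega> * X \<omega> \<partial>P) = (\<integral>\<omega>. indicator \<Gamma> \<omega> * ?Y \<omega> \<partial>P)"
    by (rule real_cond_exp_intg(2)[OF i1 Gm XP, symmetric])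
  also have "\<dots> = (\<integral>\<omega>. indicator \<Gamma> \<omega> * Z \<omega> \<partial>P)"
    by (rule integral_cong_AE) (use YZ ZP in auto)
  finally have eq: "(\<integral>\<omega>. indicator \<Gamma> \<omega> * X \<omega> \<partial>P) = (\<integral>\<omega>. indicator \<Gamma> \<omega> * Z \<omega> \<partial>P)" .
  have r: "(\<integral>\<omega>. indicator \<Gamma> \<omega> * (X \<omega> + K) \<partial>P) = (\<integral>\<omega>. indicator \<Gamma> \<omega> * (Z \<omega> + K) \<partial>P)"
    using eq Bochner_Integration.integral_add[OF i1 i3] Bochner_Integration.integral_add[OF i2 i3] by (simp add: distrib_left)
  have j1: "integrable P (\<lambda>\<omega>. indicator \<Gamma> \<omega> * (X \<omega> + K))"
    using Bochner_Integration.integrable_add[OF i1 i3] by (simp add: distrib_left)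
  have j2: "integrable P (\<lambda>\<omega>. indicator \<Gamma> \<omega> * (Z \<omega> + K))"
    using Bochner_Integration.integrable_add[OF i2 i3] by (simp add: distrib_left)
  have "(\<integral>\<^sup>+ \<omega>. ennreal (indicator \<Gamma> \<omega> * (X \<omega> + K)) \<partial>P) = ennreal (\<integral>\<omega>. indicator \<Gamma> \<omega> * (X \<omega> + K) \<partial>P)"
    by (rule nn_integral_eq_integral[OF j1], rule AE_I2) (use Xb spP in \<open>force split: split_indicator simp: abs_le_iff\<close>)
  also have "\<dots> = ennreal (\<integral>\<omega>. indicator \<Gamma> \<omega> * (Z \<omega> + K) \<partial>P)" by (simp add: r)
  also have "\<dots> = (\<integral>\<^sup>+ \<omega>. ennreal (indicator \<Gamma> \<omega> * (Z \<omega> + K)) \<partial>P)"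
    by (rule nn_integral_eq_integral[OF j2, symmetric], rule AE_I2)
       (use Zlow in \<open>auto split: split_indicator\<close>)
  finally show "(\<integral>\<^sup>+ \<omega>. ennreal (indicator \<Gamma> \<omega> * (X \<omega> + K)) \<partial>P) = (\<integral>\<^sup>+ \<omega>. ennreal (indicator \<Gamma> \<omega> * (Z \<omega> + K)) \<partial>P)" .
qed

lemma null_part:
  assumes P_prob: "prob_space P" and P_sets: "sets P = sets path_sigma"
   and Q_meas: "Q \<in> stopped_sigma \<tau> \<rightarrow>\<^sub>M prob_algebra path_sigma"
   and Q_rcpd: "\<forall>\<Gamma>\<in>sets path_sigma. AE \<omega> in P.
                   measure (Q \<omega>) \<Gamma> = real_cond_exp P (stopped_sigma \<tau>) (indicator \<Gamma>) \<omega>"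
   and g1[measurable]: "g1 \<in> borel_measurable path_sigma" and g2[measurable]: "g2 \<in> borel_measurable path_sigma"
   and S[measurable]: "S \<in> sets (stopped_sigma \<tau>)"
   and eq: "\<And>B. B \<in> sets (stopped_sigma \<tau>) \<Longrightarrow> B \<subseteq> S \<Longrightarrow>
      (\<integral>\<^sup>+ \<omega>. indicator B \<omega> * g1 \<omega> \<partial>P) = (\<integral>\<^sup>+ \<omega>. indicator B \<omega> * g2 \<omega> \<partial>P)"
  shows "{\<omega> \<in> path_space. \<omega> \<in> S \<and> (\<integral>\<^sup>+ y. g1 y \<partial>Q \<omega>) \<noteq> (\<integral>\<^sup>+ y. g2 y \<partial>Q \<omega>)} \<in> sets (stopped_sigma \<tau>)"
    "emeasure P {\<omega> \<in> path_space. \<omega> \<in> S \<and> (\<integral>\<^sup>+ y. g1 y \<partial>Q \<omega>) \<noteq> (\<integral>\<^sup>+ y. g2 y \<partial>Q \<omega>)} = 0"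
proof -
  let ?St = "stopped_sigma \<tau>"
  let ?M = "restr_to_subalg P ?St"
  let ?N = "{\<omega> \<in> path_space. \<omega> \<in> S \<and> (\<integral>\<^sup>+ y. g1 y \<partial>Q \<omega>) \<noteq> (\<integral>\<^sup>+ y. g2 y \<partial>Q \<omega>)}"
  have sub: "subalgebra P ?St" by (rule subalg_P[OF P_sets stopped_sub]) simp
  have spP: "space P = path_space" using sets_eq_imp_space_eq[OF P_sets] by simp
  have QS: "Q \<in> ?St \<rightarrow>\<^sub>M subprob_algebra path_sigma" by (rule measurable_prob_algebraD[OF Q_meas])
  have F1[measurable]: "(\<lambda>x. \<integral>\<^sup>+ y. g1 y \<partial>Q x) \<in> borel_measurable ?St"
    by (rule nn_integral_measurable_subprob_algebra[OF g1, THEN measurable_compose[OF QS]])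
  have F2[measurable]: "(\<lambda>x. \<integral>\<^sup>+ y. g2 y \<partial>Q x) \<in> borel_measurable ?St"
    by (rule nn_integral_measurable_subprob_algebra[OF g2, THEN measurable_compose[OF QS]])
  have Nm: "?N \<in> sets ?St"
  proof -
    define H1 where "H1 = (\<lambda>x. \<integral>\<^sup>+ y. g1 y \<partial>Q x)"
    define H2 where "H2 = (\<lambda>x. \<integral>\<^sup>+ y. g2 y \<partial>Q x)"
    have [measurable]: "H1 \<in> borel_measurable ?St" "H2 \<in> borel_measurable ?St"
      unfolding H1_def H2_def by (rule F1, rule F2)
    have "?N = {\<omega> \<in> space ?St. \<omega> \<in> S \<and> H1 \<omega> \<noteq> H2 \<omega>}" by (simp add: H1_def H2_def)
    also have "\<dots> = S \<inter> {\<omega> \<in> space ?St. H1 \<omega> \<noteq> H2 \<omega>}" by auto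
    also have "\<dots> \<in> sets ?St"
      by (intro sets.Int S borel_measurable_neq) measurable
    finally show ?thesis .
  qed
  then show "?N \<in> sets ?St" .
  interpret M: finite_measure ?M
    by (rule finite_measure_restr_to_subalg[OF sub]) (use P_prob in \<open>simp add: prob_space_def\<close>)
  have sM: "sets ?M = sets ?St" by (rule sets_restr_to_subalg[OF sub])
  have ae: "AE x in ?M. indicator S x * (\<integral>\<^sup>+ y. g1 y \<partial>Q x) = indicator S x * (\<integral>\<^sup>+ y. g2 y \<partial>Q x)"
  proof (rule M.density_unique_finite_measure)
    show "(\<lambda>x. indicator S x * (\<integral>\<^sup>+ y. g1 y \<partial>Q x)) \<in> borel_measurable ?M"
      unfolding measurable_cong_sets[OF sM refl] by measurable
    show "(\<lambda>x. indicator S x * (\<integral>\<^sup>+ y. g2 y \<partial>Q x)) \<in> borel_measurable ?M"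
      unfolding measurable_cong_sets[OF sM refl] by measurable
  next
    fix B assume "B \<in> sets ?M"
    then have B[measurable]: "B \<in> sets ?St" using sM by simp
    have BS: "B \<inter> S \<in> sets ?St" by simp
    have "(\<integral>\<^sup>+ x. indicator S x * (\<integral>\<^sup>+ y. g1 y \<partial>Q x) * indicator B x \<partial>?M)
        = (\<integral>\<^sup>+ x. indicator S x * (\<integral>\<^sup>+ y. g1 y \<partial>Q x) * indicator B x \<partial>P)"
      by (rule nn_integral_subalgebra2[OF sub]) measurable
    also have "\<dots> = (\<integral>\<^sup>+ x. indicator (B \<inter> S) x * (\<integral>\<^sup>+ y. g1 y \<partial>Q x) \<partial>P)"
      by (rule nn_integral_cong) (auto split: split_indicator)
    also have "\<dots> = (\<integral>\<^sup>+ x. indicator (B \<inter> S) x * g1 x \<partial>P)"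
      by (rule disint[OF P_prob P_sets Q_meas Q_rcpd BS g1])
    also have "\<dots> = (\<integral>\<^sup>+ x. indicator (B \<inter> S) x * g2 x \<partial>P)"
      by (rule eq[OF BS]) auto
    also have "\<dots> = (\<integral>\<^sup>+ x. indicator (B \<inter> S) x * (\<integral>\<^sup>+ y. g2 y \<partial>Q x) \<partial>P)"
      by (rule disint[OF P_prob P_sets Q_meas Q_rcpd BS g2, symmetric])
    also have "\<dots> = (\<integral>\<^sup>+ x. indicator S x * (\<integral>\<^sup>+ y. g2 y \<partial>Q x) * indicator B x \<partial>P)"
      by (rule nn_integral_cong) (auto split: split_indicator)
    also have "\<dots> = (\<integral>\<^sup>+ x. indicator S x * (\<integral>\<^sup>+ y. g2 y \<partial>Q x) * indicator B x \<partial>?M)"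
      by (rule nn_integral_subalgebra2[OF sub, symmetric]) measurable
    finally show "(\<integral>\<^sup>+ x. indicator S x * (\<integral>\<^sup>+ y. g1 y \<partial>Q x) * indicator B x \<partial>?M)
        = (\<integral>\<^sup>+ x. indicator S x * (\<integral>\<^sup>+ y. g2 y \<partial>Q x) * indicator B x \<partial>?M)" .
  qed auto
  have NM: "?N \<in> sets ?M" using Nm sM by simp
  have "emeasure ?M ?N = 0"
  proof (subst AE_iff_measurable[OF NM, symmetric])
    show "{x \<in> space ?M. \<not> (indicator S x * (\<integral>\<^sup>+ y. g1 y \<partial>Q x) = indicator S x * (\<integral>\<^sup>+ y. g2 y \<partial>Q x))} = ?N"
      by (auto simp: space_restr_to_subalg spP split: split_indicator)
  qed (rule ae)
  then show "emeasure P ?N = 0" using emeasure_restr_to_subalg[OF sub Nm] by simp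
qed

definition cbasis :: "'a::euclidean_space set set" where
  "cbasis = (SOME B. countable B \<and> topological_basis B)"

lemma cbasis: "countable (cbasis :: 'a::euclidean_space set set)" "topological_basis (cbasis :: 'a set set)"
proof -
  have "countable (cbasis :: 'a set set) \<and> topological_basis (cbasis :: 'a set set)"
    unfolding cbasis_def by (rule someI_ex, rule ex_countable_basis)
  then show "countable (cbasis :: 'a::euclidean_space set set)" "topological_basis (cbasis :: 'a set set)" by auto
qed

definition Dset :: "real \<Rightarrow> real set" where
  "Dset s = {q \<in> \<rat>. 0 \<le> q \<and> q \<le> s} \<union> {s}"

definition G0 :: "real \<Rightarrow> (real \<Rightarrow> 'a::euclidean_space) set set" where
  "G0 s = {(\<lambda>\<omega>. \<omega> r) -` U \<inter> path_space | r U. r \<in> Dset s \<and> U \<in> cbasis}"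

definition Egen :: "real \<Rightarrow> (real \<Rightarrow> 'a::euclidean_space) set set" where
  "Egen s = {path_space \<inter> \<Inter>F | F. finite F \<and> F \<subseteq> G0 s}"

lemma countable_Dset: "countable (Dset s)"
proof -
  have "Dset s \<subseteq> \<rat> \<union> {s}" unfolding Dset_def by auto
  moreover have "countable (\<rat> \<union> {s})" using countable_rat by simp
  ultimately show ?thesis by (rule countable_subset)
qed

lemma countable_G0: "countable (G0 s :: (real \<Rightarrow> 'a::euclidean_space) set set)"
proof -
  have "G0 s = (\<lambda>(r, U). (\<lambda>\<omega>. \<omega> r) -` U \<inter> (path_space :: (real \<Rightarrow> 'a) set)) ` (Dset s \<times> cbasis)"
    unfolding G0_def by auto
  moreover have "countable (Dset s \<times> (cbasis :: 'a set set))"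
    by (rule countable_SIGMA) (use countable_Dset cbasis(1) in auto)
  ultimately show ?thesis by simp
qed

lemma countable_Egen: "countable (Egen s :: (real \<Rightarrow> 'a::euclidean_space) set set)"
proof -
  have "Egen s = (\<lambda>F. (path_space :: (real \<Rightarrow> 'a) set) \<inter> \<Inter>F) ` {F. finite F \<and> F \<subseteq> G0 s}"
    unfolding Egen_def by auto
  moreover have "countable {F. finite F \<and> F \<subseteq> (G0 s :: (real \<Rightarrow> 'a) set set)}"
    by (rule countable_Collect_finite_subset[OF countable_G0])
  ultimately show ?thesis by simp
qed

lemma Int_stable_Egen: "Int_stable (Egen s)"
  unfolding Int_stable_def Egen_def
proof (clarify)
  fix F1 F2 :: "(real \<Rightarrow> 'a) set set"
  assume "finite F1" "F1 \<subseteq> G0 s" "finite F2" "F2 \<subseteq> G0 s"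
  then show "\<exists>F. path_space \<inter> \<Inter> F1 \<inter> (path_space \<inter> \<Inter> F2) = path_space \<inter> \<Inter> F \<and> finite F \<and> F \<subseteq> G0 s"
    by (intro exI[of _ "F1 \<union> F2"]) auto
qed

lemma Egen_Pow: "Egen s \<subseteq> Pow path_space"
  unfolding Egen_def by auto

lemma space_in_Egen: "path_space \<in> Egen s"
  unfolding Egen_def by (intro CollectI exI[of _ "{}"]) auto

lemma G0_Egen: "G0 s \<subseteq> Egen s"
proof
  fix g assume g: "g \<in> G0 s"
  then have "g \<subseteq> path_space" unfolding G0_def by auto
  then have "g = path_space \<inter> \<Inter>{g}" by auto
  then show "g \<in> Egen s" unfolding Egen_def using g by blast
qed

lemma Egen_sub: "Egen s \<subseteq> sets (coord_filt s)" if s: "0 \<le> s"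
proof
  have G: "G0 s \<subseteq> sets (coord_filt s)"
  proof
    fix g assume "g \<in> G0 s"
    then obtain r U where g: "g = (\<lambda>\<omega>. \<omega> r) -` U \<inter> path_space" "r \<in> Dset s" "U \<in> cbasis"
      unfolding G0_def by auto
    have "open U" using g(3) cbasis(2) topological_basis_open by blast
    moreover have "0 \<le> r \<and> r \<le> s" using g(2) s unfolding Dset_def by auto
    ultimately show "g \<in> sets (coord_filt s)" unfolding sets_coord_filt g(1) by blast
  qed
  fix e assume "e \<in> Egen s"
  then obtain F where e: "e = path_space \<inter> \<Inter>F" "finite F" "F \<subseteq> G0 s" unfolding Egen_def by auto
  have "F \<subseteq> sets (coord_filt s) \<Longrightarrow> path_space \<inter> \<Inter>F \<in> sets (coord_filt s)" using e(2)
  proof (induction F rule: finite_induct)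
    case empty
    then show ?case using sets.top[of "coord_filt s"] by simp
  next
    case (insert x F)
    then have "path_space \<inter> \<Inter>(insert x F) = x \<inter> (path_space \<inter> \<Inter>F)" by auto
    then show ?case using insert by (auto intro: sets.Int)
  qed
  then show "e \<in> sets (coord_filt s)" using e G by auto
qed

lemma Egen_gen: "sigma_sets path_space (Egen s :: (real \<Rightarrow> 'a::euclidean_space) set set) = sets (coord_filt s)" if s: "0 \<le> s"
proof
  show "sigma_sets path_space (Egen s) \<subseteq> sets (coord_filt s)"
    using sets.sigma_sets_subset[OF Egen_sub[OF s]] by simp
next
  define M where "M = sigma (path_space :: (real \<Rightarrow> 'a) set) (Egen s)"
  have sM: "sets M = sigma_sets path_space (Egen s)" unfolding M_def
    by (rule sets_measure_of[OF Egen_Pow])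
  have spM: "space M = path_space" unfolding M_def by (simp add: space_measure_of_conv)
  have mD: "(\<lambda>\<omega>. \<omega> r) \<in> borel_measurable M" if r: "r \<in> Dset s" for r
  proof (rule measurable_sigma_sets)
    show "sets (borel :: 'a measure) = sigma_sets UNIV cbasis"
      by (subst borel_eq_countable_basis[OF cbasis]) (simp add: sets_measure_of)
    show "cbasis \<subseteq> Pow UNIV" by simp
    show "(\<lambda>\<omega>. \<omega> r) \<in> space M \<rightarrow> UNIV" by simp
    fix y assume "y \<in> (cbasis :: 'a set set)"
    then have "(\<lambda>\<omega>. \<omega> r) -` y \<inter> space M \<in> G0 s" unfolding G0_def spM using r by blast
    then show "(\<lambda>\<omega>. \<omega> r) -` y \<inter> space M \<in> sets M" using G0_Egen sM by auto
  qed
  have mR: "(\<lambda>\<omega>. \<omega> r) \<in> borel_measurable M" if r: "0 \<le> r" "r \<le> s" for r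
  proof (cases "r = s")
    case True
    then show ?thesis using mD unfolding Dset_def by auto
  next
    case False
    then have rs: "r < s" using r by simp
    have "\<exists>q. q \<in> \<rat> \<and> r < q \<and> q < min s (r + 1 / (real n + 1))" for n :: nat
    proof -
      have "r < min s (r + 1 / (real n + 1))" using rs by simp
      then show ?thesis using Rats_dense_in_real by blast
    qed
    then obtain q where q: "\<And>n. q n \<in> \<rat> \<and> r < q n \<and> q n < min s (r + 1 / (real n + 1))"
      by metis
    have qD: "q n \<in> Dset s" for n using q[of n] r unfolding Dset_def by auto
    have qlim: "q \<longlonglongrightarrow> r"
    proof (rule real_tendsto_sandwich[where f="\<lambda>n. r" and h="\<lambda>n. r + 1 / (real n + 1)"])
      show "\<forall>\<^sub>F n in sequentially. r \<le> q n"
        by (intro always_eventually allI) (use q in \<open>auto intro: less_imp_le\<close>)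
      show "\<forall>\<^sub>F n in sequentially. q n \<le> r + 1 / (real n + 1)"
        by (intro always_eventually allI) (use q in \<open>auto intro: less_imp_le\<close>)
      show "(\<lambda>n. r) \<longlonglongrightarrow> r" by simp
      have "(\<lambda>n. 1 / (real n + 1)) \<longlonglongrightarrow> 0"
        using LIMSEQ_inverse_real_of_nat by (simp add: inverse_eq_divide add.commute)
      then have "(\<lambda>n. r + 1 / (real n + 1)) \<longlonglongrightarrow> r + 0"
        by (intro tendsto_add tendsto_const)
      then show "(\<lambda>n. r + 1 / (real n + 1)) \<longlonglongrightarrow> r"
        by simp
    qed
    show ?thesis
    proof (rule borel_measurable_LIMSEQ_metric[where f="\<lambda>n \<omega>. \<omega> (q n)"])
      show "(\<lambda>\<omega>. \<omega> (q n)) \<in> borel_measurable M" for n by (rule mD[OF qD])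
      fix \<omega> :: "real \<Rightarrow> 'a" assume "\<omega> \<in> space M"
      then have c: "continuous_on {0..} \<omega>" using spM unfolding path_space_def by auto
      have "(\<omega> \<circ> q) \<longlonglongrightarrow> \<omega> r"
      proof -
        have "\<forall>n. 0 \<le> q n" using q r by (meson less_eq_real_def order_trans)
        then show ?thesis using c[unfolded continuous_on_sequentially] qlim r by auto
      qed
      then show "(\<lambda>n. \<omega> (q n)) \<longlonglongrightarrow> \<omega> r" by (simp add: comp_def)
    qed
  qed
  have key: "(\<lambda>\<omega>. \<omega> r) -` U \<inter> (path_space :: (real \<Rightarrow> 'a) set) \<in> sigma_sets path_space (Egen s)"
    if "0 \<le> r" "r \<le> s" "open (U :: 'a set)" for r U
  proof -
    have "(\<lambda>\<omega>. \<omega> r) -` U \<inter> space M \<in> sets M"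
      using that mR measurable_sets borel_open by blast
    then show ?thesis using sM spM by simp
  qed
  have "{(\<lambda>\<omega>. \<omega> r) -` U \<inter> (path_space :: (real \<Rightarrow> 'a) set) | r U. 0 \<le> r \<and> r \<le> s \<and> open U} \<subseteq> sigma_sets path_space (Egen s)"
    using key by blast
  then show "sets (coord_filt s) \<subseteq> sigma_sets path_space (Egen s :: (real \<Rightarrow> 'a) set set)"
    unfolding sets_coord_filt by (rule sigma_sets_mono)
qed

lemma ext_eq:
  fixes R :: "(real \<Rightarrow> 'a::euclidean_space) measure"
  assumes R: "prob_space R" and Rs: "sets R = sets path_sigma" and s: "0 \<le> s"
    and F1[measurable]: "F1 \<in> borel_measurable path_sigma" and F2[measurable]: "F2 \<in> borel_measurable path_sigma"
    and b1: "\<And>y. y \<in> path_space \<Longrightarrow> 0 \<le> F1 y \<and> F1 y \<le> C"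
    and b2: "\<And>y. y \<in> path_space \<Longrightarrow> 0 \<le> F2 y \<and> F2 y \<le> C"
    and eq: "\<And>\<Gamma>. \<Gamma> \<in> Egen s \<Longrightarrow>
       (\<integral>\<^sup>+ y. ennreal (indicator \<Gamma> y * F1 y) \<partial>R) = (\<integral>\<^sup>+ y. ennreal (indicator \<Gamma> y * F2 y) \<partial>R)"
    and G: "\<Gamma> \<in> sets (coord_filt s)"
  shows "(\<integral> y. indicator \<Gamma> y * F1 y \<partial>R) = (\<integral> y. indicator \<Gamma> y * F2 y \<partial>R)"
proof -
  interpret R: prob_space R by (rule R)
  have spR: "space R = path_space" using sets_eq_imp_space_eq[OF Rs] by simp
  have F1R[measurable]: "F1 \<in> borel_measurable R" using F1 measurable_cong_sets[OF Rs refl] by blast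
  have F2R[measurable]: "F2 \<in> borel_measurable R" using F2 measurable_cong_sets[OF Rs refl] by blast
  have conv: "(\<integral>\<^sup>+ y. ennreal (indicator \<Gamma>' y * F y) \<partial>R) = emeasure (density R (\<lambda>y. ennreal (F y))) \<Gamma>'"
    if "\<Gamma>' \<in> sets R" "F \<in> borel_measurable R" for \<Gamma>' F
    using that by (subst emeasure_density) (auto intro!: nn_integral_cong split: split_indicator)
  let ?M1 = "restr_to_subalg (density R (\<lambda>y. ennreal (F1 y))) (coord_filt s)"
  let ?M2 = "restr_to_subalg (density R (\<lambda>y. ennreal (F2 y))) (coord_filt s)"
  have sub1: "subalgebra (density R (\<lambda>y. ennreal (F1 y))) (coord_filt s)"
    unfolding subalgebra_def using coord_filt_sub Rs spR by auto
  have sub2: "subalgebra (density R (\<lambda>y. ennreal (F2 y))) (coord_filt s)"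
    unfolding subalgebra_def using coord_filt_sub Rs spR by auto
  have CR: "sets (coord_filt s) \<subseteq> sets R" using coord_filt_sub Rs by auto
  have E_sub: "Egen s \<subseteq> sets (coord_filt s)" by (rule Egen_sub[OF s])
  have "?M1 = ?M2"
  proof (rule measure_eqI_generator_eq[OF Int_stable_Egen[where 'a='a] Egen_Pow[where 'a='a], where A="\<lambda>_. path_space"])
    fix X :: "(real \<Rightarrow> 'a) set" assume X: "X \<in> Egen s"
    then have XR: "X \<in> sets R" using E_sub CR by auto
    show "emeasure ?M1 X = emeasure ?M2 X"
      using X E_sub emeasure_restr_to_subalg[OF sub1] emeasure_restr_to_subalg[OF sub2]
        conv[OF XR F1R] conv[OF XR F2R] eq[OF X] by auto
  next
    show "sets ?M1 = sigma_sets path_space (Egen s :: (real \<Rightarrow> 'a) set set)"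
      using sets_restr_to_subalg[OF sub1] Egen_gen[OF s, where 'a='a] by simp
    show "sets ?M2 = sigma_sets path_space (Egen s :: (real \<Rightarrow> 'a) set set)"
      using sets_restr_to_subalg[OF sub2] Egen_gen[OF s, where 'a='a] by simp
    show "range (\<lambda>_. path_space) \<subseteq> (Egen s :: (real \<Rightarrow> 'a) set set)" using space_in_Egen by auto
    show "(\<Union>i::nat. path_space) = path_space" by simp
    fix i :: nat
    have "emeasure ?M1 path_space = emeasure (density R (\<lambda>y. ennreal (F1 y))) path_space"
      using emeasure_restr_to_subalg[OF sub1, of path_space] sets.top[of "coord_filt s"] by simp
    also have "\<dots> = (\<integral>\<^sup>+ y. ennreal (indicator path_space y * F1 y) \<partial>R)"
      using conv[of path_space F1] spR sets.top[of R] by simp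
    also have "\<dots> \<le> (\<integral>\<^sup>+ y. ennreal C \<partial>R)"
      by (intro nn_integral_mono) (use b1 in \<open>auto split: split_indicator intro!: ennreal_leI\<close>)
    also have "\<dots> < \<infinity>" using R.emeasure_space_1 by simp
    finally show "emeasure ?M1 path_space \<noteq> \<infinity>" by simp
  qed
  then have "emeasure (density R (\<lambda>y. ennreal (F1 y))) \<Gamma> = emeasure (density R (\<lambda>y. ennreal (F2 y))) \<Gamma>"
    using emeasure_restr_to_subalg[OF sub1 G] emeasure_restr_to_subalg[OF sub2 G] by simp
  then have nn: "(\<integral>\<^sup>+ y. ennreal (indicator \<Gamma> y * F1 y) \<partial>R) = (\<integral>\<^sup>+ y. ennreal (indicator \<Gamma> y * F2 y) \<partial>R)"
    using conv[of \<Gamma> F1] conv[of \<Gamma> F2] G CR by auto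
  have GR: "\<Gamma> \<in> sets R" using G CR by auto
  have C0: "0 \<le> C" using b1[OF path_space_ne] by auto
  have i1: "integrable R (\<lambda>y. indicator \<Gamma> y * F1 y)"
    by (rule R.integrable_const_bound[where B=C]) (use b1 GR C0 spR in \<open>auto split: split_indicator\<close>)
  have i2: "integrable R (\<lambda>y. indicator \<Gamma> y * F2 y)"
    by (rule R.integrable_const_bound[where B=C]) (use b2 GR C0 spR in \<open>auto split: split_indicator\<close>)
  have "ennreal (\<integral> y. indicator \<Gamma> y * F1 y \<partial>R) = ennreal (\<integral> y. indicator \<Gamma> y * F2 y \<partial>R)"
  proof -
    have "AE y in R. 0 \<le> indicator \<Gamma> y * F1 y" "AE y in R. 0 \<le> indicator \<Gamma> y * F2 y"
      using b1 b2 spR by (auto intro!: AE_I2)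
    then show ?thesis using nn nn_integral_eq_integral[OF i1] nn_integral_eq_integral[OF i2] by simp
  qed
  moreover have "0 \<le> (\<integral> y. indicator \<Gamma> y * F1 y \<partial>R)" "0 \<le> (\<integral> y. indicator \<Gamma> y * F2 y \<partial>R)"
    using b1 b2 spR by (auto intro!: integral_nonneg_AE AE_I2)
  ultimately show ?thesis by simp
qed

lemma final_step:
  fixes R :: "(real \<Rightarrow> 'a::euclidean_space) measure"
  assumes R: "prob_space R" and Rs: "sets R = sets path_sigma"
    and Ym[measurable]: "Y \<in> borel_measurable path_sigma" and Yb: "\<forall>y\<in>path_space. \<bar>Y y\<bar> \<le> K"
    and H: "\<forall>\<Gamma>\<in>sets (coord_filt t). (\<integral> y. indicator \<Gamma> y * (Y y + K) \<partial>R) \<le> (A + K) * measure R \<Gamma>"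
  shows "AE y in R. real_cond_exp R (coord_filt t) Y y \<le> A"
proof -
  interpret R: prob_space R by (rule R)
  have spR: "space R = path_space" using sets_eq_imp_space_eq[OF Rs] by simp
  have sub: "subalgebra R (coord_filt t)" by (rule subalg_P[OF Rs coord_filt_sub]) simp
  interpret sigma_finite_subalgebra R "coord_filt t" by (rule fms[OF R sub])
  have YR[measurable]: "Y \<in> borel_measurable R" using Ym measurable_cong_sets[OF Rs refl] by blast
  have intY: "integrable R Y" by (rule R.integrable_const_bound[where B=K]) (use Yb spR in auto)
  define C where "C = real_cond_exp R (coord_filt t) Y"
  have Cm[measurable]: "C \<in> borel_measurable (coord_filt t)" unfolding C_def by (rule borel_measurable_cond_exp)
  have CR[measurable]: "C \<in> borel_measurable R" by (rule measurable_from_subalg[OF sub Cm])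
  have intC: "integrable R C" unfolding C_def by (rule real_cond_exp_int(1)[OF intY])
  define G where "G = {y \<in> space (coord_filt t). A < C y}"
  have G[measurable]: "G \<in> sets (coord_filt t)" unfolding G_def by measurable
  have GR[measurable]: "G \<in> sets R" using G sub unfolding subalgebra_def by auto
  have K0: "0 \<le> K" using Yb path_space_ne by force
  have i1: "integrable R (\<lambda>y. indicator G y * Y y)" using integrable_mult_indicator[OF GR intY] by simp
  have i2: "integrable R (\<lambda>y. indicator G y * K)"
    by (rule R.integrable_const_bound[where B=K]) (use K0 in \<open>auto split: split_indicator\<close>)
  have i3: "integrable R (\<lambda>y. indicator G y * C y)" using integrable_mult_indicator[OF GR intC] by simp
  have i4: "integrable R (\<lambda>y. indicator G y * A)"
    by (rule R.integrable_const_bound[where B="\<bar>A\<bar>"]) (auto split: split_indicator)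
  have "(\<integral> y. indicator G y * (Y y + K) \<partial>R) = (\<integral> y. indicator G y * Y y \<partial>R) + K * measure R G"
    using Bochner_Integration.integral_add[OF i1 i2] GR by (simp add: distrib_left mult.commute)
  moreover have "(\<integral> y. indicator G y * Y y \<partial>R) = (\<integral> y. indicator G y * C y \<partial>R)"
    using real_cond_exp_intA[OF intY G] unfolding C_def set_lebesgue_integral_def by simp
  moreover have "(\<integral> y. indicator G y * (Y y + K) \<partial>R) \<le> (A + K) * measure R G" using H G by auto
  ultimately have "(\<integral> y. indicator G y * C y \<partial>R) \<le> A * measure R G" by (simp add: distrib_right)
  moreover have "(\<integral> y. indicator G y * (C y - A) \<partial>R) = (\<integral> y. indicator G y * C y \<partial>R) - A * measure R G"
    using Bochner_Integration.integral_diff[OF i3 i4] GR by (simp add: right_diff_distrib mult.commute)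
  ultimately have le: "(\<integral> y. indicator G y * (C y - A) \<partial>R) \<le> 0" by simp
  have nonneg: "\<And>y. 0 \<le> indicator G y * (C y - A)"
    unfolding G_def by (auto split: split_indicator)
  have i5: "integrable R (\<lambda>y. indicator G y * (C y - A))"
    using Bochner_Integration.integrable_diff[OF i3 i4] by (simp add: right_diff_distrib)
  have "(\<integral> y. indicator G y * (C y - A) \<partial>R) = 0"
  proof -
    have "0 \<le> (\<integral> y. indicator G y * (C y - A) \<partial>R)"
      by (rule integral_nonneg_AE) (use nonneg in auto)
    then show ?thesis using le by linarith
  qed
  then have "AE y in R. indicator G y * (C y - A) = 0"
    using integral_nonneg_eq_0_iff_AE[OF i5] nonneg by auto
  moreover have "AE y in R. y \<in> space R" by simp
  ultimately show ?thesis
  proof eventually_elim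
    case (elim y)
    then show ?case unfolding C_def[symmetric] G_def using spR by (auto simp: indicator_def not_less split: if_splits)
  qed
qed

lemma limit_step:
  fixes R :: "(real \<Rightarrow> 'a::euclidean_space) measure"
  assumes R: "prob_space R" and Rs: "sets R = sets path_sigma"
    and X_meas: "\<forall>t\<ge>0. X t \<in> borel_measurable path_sigma"
    and X_cont: "\<forall>\<omega>\<in>path_space. continuous_on {0..} (\<lambda>t. X t \<omega>)"
    and Xb: "\<forall>t\<ge>0. \<forall>\<omega>\<in>path_space. \<bar>X t \<omega>\<bar> \<le> K"
    and t: "0 \<le> t"
    and H: "\<And>s. s \<in> \<rat> \<Longrightarrow> t < s \<Longrightarrow>
       \<forall>\<Gamma>\<in>sets (coord_filt s). (\<integral> y. indicator \<Gamma> y * (X s y + K) \<partial>R) \<le> (A + K) * measure R \<Gamma>"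
  shows "\<forall>\<Gamma>\<in>sets (coord_filt t). (\<integral> y. indicator \<Gamma> y * (X t y + K) \<partial>R) \<le> (A + K) * measure R \<Gamma>"
proof
  fix \<Gamma> :: "(real \<Rightarrow> 'a) set" assume G: "\<Gamma> \<in> sets (coord_filt t)"
  interpret R: prob_space R by (rule R)
  have spR: "space R = path_space" using sets_eq_imp_space_eq[OF Rs] by simp
  have GR: "\<Gamma> \<in> sets R" using G coord_filt_sub Rs by auto
  have "\<exists>q. q \<in> \<rat> \<and> t < q \<and> q < t + 1 / (real n + 1)" for n :: nat
  proof -
    have "t < t + 1 / (real n + 1)" by simp
    then show ?thesis using Rats_dense_in_real by blast
  qed
  then obtain q where q: "\<And>n. q n \<in> \<rat> \<and> t < q n \<and> q n < t + 1 / (real n + 1)" by metis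
  have qlim: "q \<longlonglongrightarrow> t"
  proof (rule real_tendsto_sandwich[where f="\<lambda>n. t" and h="\<lambda>n. t + 1 / (real n + 1)"])
    show "\<forall>\<^sub>F n in sequentially. t \<le> q n"
      by (intro always_eventually allI) (use q in \<open>auto intro: less_imp_le\<close>)
    show "\<forall>\<^sub>F n in sequentially. q n \<le> t + 1 / (real n + 1)"
      by (intro always_eventually allI) (use q in \<open>auto intro: less_imp_le\<close>)
    show "(\<lambda>n. t) \<longlonglongrightarrow> t" by simp
    have "(\<lambda>n. 1 / (real n + 1)) \<longlonglongrightarrow> 0"
      using LIMSEQ_inverse_real_of_nat by (simp add: inverse_eq_divide add.commute)
    then have "(\<lambda>n. t + 1 / (real n + 1)) \<longlonglongrightarrow> t + 0"
      by (intro tendsto_add tendsto_const)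
    then show "(\<lambda>n. t + 1 / (real n + 1)) \<longlonglongrightarrow> t" by simp
  qed
  have q0: "0 \<le> q n" for n using q[of n] t by auto
  have Xm: "X s \<in> borel_measurable R" if "0 \<le> s" for s
    using X_meas that measurable_cong_sets[OF Rs refl] by blast
  have K0: "0 \<le> K" using Xb path_space_ne by force
  have bnd: "\<And>n. \<forall>y\<in>space R. norm (indicator \<Gamma> y * (X (q n) y + K)) \<le> 2 * K"
  proof (intro ballI)
    fix n y assume y: "y \<in> space R"
    have "\<bar>X (q n) y\<bar> \<le> K" using Xb q0 spR y by auto
    then show "norm (indicator \<Gamma> y * (X (q n) y + K)) \<le> 2 * K"
      using K0 by (auto split: split_indicator simp: abs_le_iff)
  qed
  have lim: "(\<lambda>n. \<integral> y. indicator \<Gamma> y * (X (q n) y + K) \<partial>R) \<longlonglongrightarrow> (\<integral> y. indicator \<Gamma> y * (X t y + K) \<partial>R)"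
  proof (rule integral_dominated_convergence[where w="\<lambda>_. 2 * K"])
    show "(\<lambda>y. indicator \<Gamma> y * (X t y + K)) \<in> borel_measurable R"
      using Xm[OF t] GR by measurable
    show "(\<lambda>y. indicator \<Gamma> y * (X (q n) y + K)) \<in> borel_measurable R" for n
      using Xm[OF q0] GR by measurable
    show "integrable R (\<lambda>_. 2 * K)" by simp
    show "AE y in R. (\<lambda>n. indicator \<Gamma> y * (X (q n) y + K)) \<longlonglongrightarrow> indicator \<Gamma> y * (X t y + K)"
    proof (rule AE_I2)
      fix y assume "y \<in> space R"
      then have c: "continuous_on {0..} (\<lambda>t. X t y)" using X_cont spR by auto
      have "((\<lambda>t. X t y) \<circ> q) \<longlonglongrightarrow> X t y"
        using c[unfolded continuous_on_sequentially] qlim q0 t by auto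
      then have "(\<lambda>n. X (q n) y) \<longlonglongrightarrow> X t y" by (simp add: comp_def)
      then show "(\<lambda>n. indicator \<Gamma> y * (X (q n) y + K)) \<longlonglongrightarrow> indicator \<Gamma> y * (X t y + K)"
        by (intro tendsto_mult tendsto_add tendsto_const)
    qed
    show "AE y in R. norm (indicator \<Gamma> y * (X (q n) y + K)) \<le> 2 * K" for n
      using bnd[of n] by (intro AE_I2) auto
  qed
  have "\<forall>n. (\<integral> y. indicator \<Gamma> y * (X (q n) y + K) \<partial>R) \<le> (A + K) * measure R \<Gamma>"
  proof
    fix n
    have "\<Gamma> \<in> sets (coord_filt (q n))" using G coord_filt_mono[of t "q n"] q[of n] by auto
    then show "(\<integral> y. indicator \<Gamma> y * (X (q n) y + K) \<partial>R) \<le> (A + K) * measure R \<Gamma>"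
      using H[of "q n"] q[of n] by auto
  qed
  then show "(\<integral> y. indicator \<Gamma> y * (X t y + K) \<partial>R) \<le> (A + K) * measure R \<Gamma>"
    using LIMSEQ_le_const2[OF lim] by blast
qed

theorem lemma7p4:
  fixes P :: "(real \<Rightarrow> 'a::euclidean_space) measure"
    and \<tau> :: "(real \<Rightarrow> 'a) \<Rightarrow> real"
    and Q :: "(real \<Rightarrow> 'a) \<Rightarrow> (real \<Rightarrow> 'a) measure"
    and X :: "real \<Rightarrow> (real \<Rightarrow> 'a) \<Rightarrow> real"
    and A :: real
  assumes P_prob: "prob_space P"
    and P_sets: "sets P = sets path_sigma"
    and tau_nonneg: "\<forall>\<omega>\<in>path_space. 0 \<le> \<tau> \<omega>"
    and tau_stop: "stopping_time coord_filt \<tau>"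
    and Q_meas: "Q \<in> stopped_sigma \<tau> \<rightarrow>\<^sub>M prob_algebra path_sigma"
    and Q_rcpd: "\<forall>\<Gamma>\<in>sets path_sigma. AE \<omega> in P.
                   measure (Q \<omega>) \<Gamma> = real_cond_exp P (stopped_sigma \<tau>) (indicator \<Gamma>) \<omega>"
    and X_meas: "\<forall>t\<ge>0. X t \<in> borel_measurable path_sigma"
    and X_cont: "\<forall>\<omega>\<in>path_space. continuous_on {0..} (\<lambda>t. X t \<omega>)"
    and X_bdd: "\<exists>K. \<forall>t\<ge>0. \<forall>\<omega>\<in>path_space. \<bar>X t \<omega>\<bar> \<le> K"
    and X_sub: "\<forall>t\<ge>0. AE \<omega> in P. real_cond_exp P (coord_filt t) (X t) \<omega> \<le> A"
  shows "\<exists>N \<in> sets (stopped_sigma \<tau>). emeasure P N = 0 \<and>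
           (\<forall>\<omega>\<in>path_space - N. \<forall>t\<ge>\<tau> \<omega>.
              AE \<omega>' in Q \<omega>. real_cond_exp (Q \<omega>) (coord_filt t) (X t) \<omega>' \<le> A)"
proof -
  obtain K0 where K0: "\<forall>t\<ge>0. \<forall>\<omega>\<in>path_space. \<bar>X t \<omega>\<bar> \<le> K0" using X_bdd by blast
  define K where "K = max K0 \<bar>A\<bar>"
  have Xb: "\<forall>t\<ge>0. \<forall>\<omega>\<in>path_space. \<bar>X t \<omega>\<bar> \<le> K" using K0 unfolding K_def by force
  have AK: "\<bar>A\<bar> \<le> K" unfolding K_def by simp
  have Kpos: "0 \<le> K" using AK abs_ge_zero[of A] by linarith
  let ?St = "stopped_sigma \<tau>"
  define Z where "Z s = (\<lambda>\<omega>. max (-K) (min A (real_cond_exp P (coord_filt s) (X s) \<omega>)))" for s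
  have Zp: "Z s \<in> borel_measurable (coord_filt s)" "\<And>\<omega>. -K \<le> Z s \<omega> \<and> Z s \<omega> \<le> A"
    "\<And>\<Gamma>. \<Gamma> \<in> sets (coord_filt s) \<Longrightarrow>
      (\<integral>\<^sup>+ \<omega>. ennreal (indicator \<Gamma> \<omega> * (X s \<omega> + K)) \<partial>P) = (\<integral>\<^sup>+ \<omega>. ennreal (indicator \<Gamma> \<omega> * (Z s \<omega> + K)) \<partial>P)"
    if s0: "0 \<le> s" for s
  proof -
    have Zd: "Z s = (\<lambda>\<omega>. max (-K) (min A (real_cond_exp P (coord_filt s) (X s) \<omega>)))" by (simp add: Z_def)
    have Xbs: "\<forall>\<omega>\<in>path_space. \<bar>X s \<omega>\<bar> \<le> K" using Xb s0 by auto
    note ZZ = Z_props[OF P_prob P_sets X_meas[rule_format, OF s0] Xbs AK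
        X_sub[rule_format, OF s0] Zd]
    show "Z s \<in> borel_measurable (coord_filt s)" by (rule ZZ(1))
    show "\<And>\<omega>. -K \<le> Z s \<omega> \<and> Z s \<omega> \<le> A" by (rule ZZ(2))
    show "\<And>\<Gamma>. \<Gamma> \<in> sets (coord_filt s) \<Longrightarrow>
      (\<integral>\<^sup>+ \<omega>. ennreal (indicator \<Gamma> \<omega> * (X s \<omega> + K)) \<partial>P) = (\<integral>\<^sup>+ \<omega>. ennreal (indicator \<Gamma> \<omega> * (Z s \<omega> + K)) \<partial>P)"
      by (rule ZZ(3))
  qed
  have Zm: "Z s \<in> borel_measurable path_sigma" if s0: "0 \<le> s" for s
  proof -
    have "subalgebra path_sigma (coord_filt s)" unfolding subalgebra_def using coord_filt_sub by auto
    then show ?thesis using measurable_from_subalg Zp(1)[OF s0] by blast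
  qed
  define g1 where "g1 s \<Gamma> = (\<lambda>y. ennreal (indicator \<Gamma> y * (X s y + K)))" for s \<Gamma>
  define g2 where "g2 s \<Gamma> = (\<lambda>y. ennreal (indicator \<Gamma> y * (Z s y + K)))" for s \<Gamma>
  define S where "S s = {\<omega> \<in> path_space. \<tau> \<omega> \<le> s}" for s
  define Nset where "Nset s \<Gamma> = {\<omega> \<in> path_space. \<omega> \<in> S s \<and> (\<integral>\<^sup>+ y. g1 s \<Gamma> y \<partial>Q \<omega>) \<noteq> (\<integral>\<^sup>+ y. g2 s \<Gamma> y \<partial>Q \<omega>)}"
    for s \<Gamma>
  define Sq where "Sq = {q \<in> \<rat>. (0::real) \<le> q}"
  have Nprops: "Nset s \<Gamma> \<in> sets ?St \<and> emeasure P (Nset s \<Gamma>) = 0" if s: "s \<in> Sq" "\<Gamma> \<in> Egen s" for s \<Gamma>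
  proof -
    have s0: "0 \<le> s" using s unfolding Sq_def by auto
    have G: "\<Gamma> \<in> sets (coord_filt s)" using Egen_sub[OF s0] s(2) by auto
    have GP[measurable]: "\<Gamma> \<in> sets path_sigma" using coord_filt_sub G by auto
    have Xm[measurable]: "X s \<in> borel_measurable path_sigma" using X_meas s0 by auto
    have Zm'[measurable]: "Z s \<in> borel_measurable path_sigma" by (rule Zm[OF s0])
    have g1m: "g1 s \<Gamma> \<in> borel_measurable path_sigma" unfolding g1_def by measurable
    have g2m: "g2 s \<Gamma> \<in> borel_measurable path_sigma" unfolding g2_def by measurable
    have Sm: "S s \<in> sets ?St" unfolding S_def by (rule tau_le_stopped[OF tau_stop])
    have eq: "(\<integral>\<^sup>+ \<omega>. indicator B \<omega> * g1 s \<Gamma> \<omega> \<partial>P) = (\<integral>\<^sup>+ \<omega>. indicator B \<omega> * g2 s \<Gamma> \<omega> \<partial>P)"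
      if B: "B \<in> sets ?St" "B \<subseteq> S s" for B
    proof -
      have "{\<omega> \<in> B. \<tau> \<omega> \<le> s} \<in> sets (coord_filt s)" using stopped_prop[OF tau_stop B(1)] s0 by auto
      moreover have "{\<omega> \<in> B. \<tau> \<omega> \<le> s} = B" using B(2) unfolding S_def by auto
      ultimately have Bc: "B \<in> sets (coord_filt s)" by simp
      then have BG: "B \<inter> \<Gamma> \<in> sets (coord_filt s)" using G by auto
      have "(\<integral>\<^sup>+ \<omega>. indicator B \<omega> * g1 s \<Gamma> \<omega> \<partial>P) = (\<integral>\<^sup>+ \<omega>. ennreal (indicator (B \<inter> \<Gamma>) \<omega> * (X s \<omega> + K)) \<partial>P)"
        unfolding g1_def by (rule nn_integral_cong) (auto split: split_indicator)
      also have "\<dots> = (\<integral>\<^sup>+ \<omega>. ennreal (indicator (B \<inter> \<Gamma>) \<omega> * (Z s \<omega> + K)) \<partial>P)"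
        by (rule Zp(3)[OF s0 BG])
      also have "\<dots> = (\<integral>\<^sup>+ \<omega>. indicator B \<omega> * g2 s \<Gamma> \<omega> \<partial>P)"
        unfolding g2_def by (rule nn_integral_cong) (auto split: split_indicator)
      finally show ?thesis .
    qed
    show ?thesis using null_part[OF P_prob P_sets Q_meas Q_rcpd g1m g2m Sm eq] unfolding Nset_def by auto
  qed
  have cSq: "countable Sq"
  proof -
    have "Sq \<subseteq> \<rat>" unfolding Sq_def by auto
    then show ?thesis using countable_rat countable_subset by blast
  qed
  have cI: "countable (Sigma Sq (Egen :: real \<Rightarrow> (real \<Rightarrow> 'a) set set))"
    by (rule countable_SIGMA[OF cSq countable_Egen])
  define N where "N = (\<Union>p\<in>Sigma Sq (Egen :: real \<Rightarrow> (real \<Rightarrow> 'a) set set). Nset (fst p) (snd p))"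
  have Nm: "N \<in> sets ?St" unfolding N_def
    by (rule sets.countable_UN'[OF cI]) (use Nprops in auto)
  have N0: "N \<in> null_sets P" unfolding N_def
  proof (rule null_sets_UN'[OF cI])
    fix p assume p: "p \<in> Sigma Sq (Egen :: real \<Rightarrow> (real \<Rightarrow> 'a) set set)"
    then have "Nset (fst p) (snd p) \<in> sets ?St" "emeasure P (Nset (fst p) (snd p)) = 0"
      using Nprops[of "fst p" "snd p"] by auto
    moreover have "sets ?St \<subseteq> sets P" using stopped_sub P_sets by auto
    ultimately show "Nset (fst p) (snd p) \<in> null_sets P" by (auto intro: null_setsI)
  qed
  show ?thesis
  proof (rule bexI[OF conjI[OF _ ballI[OF allI[OF impI]]] Nm])
    show "emeasure P N = 0" using N0 by auto
  next
    fix \<omega> t assume \<omega>: "\<omega> \<in> path_space - N" and t: "\<tau> \<omega> \<le> t"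
    have \<omega>\<Omega>: "\<omega> \<in> path_space" using \<omega> by auto
    have t0: "0 \<le> t" using tau_nonneg \<omega>\<Omega> t by force
    note Qi = Q_in[OF Q_meas \<omega>\<Omega>]
    interpret Qw: prob_space "Q \<omega>" by (rule Qi(2))
    have stepS: "\<forall>\<Gamma>\<in>sets (coord_filt s). (\<integral> y. indicator \<Gamma> y * (X s y + K) \<partial>Q \<omega>) \<le> (A + K) * measure (Q \<omega>) \<Gamma>"
      if s: "s \<in> \<rat>" "t < s" for s
    proof
      fix \<Gamma> :: "(real \<Rightarrow> 'a) set" assume G: "\<Gamma> \<in> sets (coord_filt s)"
      have s0: "0 \<le> s" using t0 s by auto
      have sSq: "s \<in> Sq" using s0 s unfolding Sq_def by auto
      have ts: "\<omega> \<in> S s" using t s \<omega>\<Omega> unfolding S_def by auto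
      have Xm[measurable]: "X s \<in> borel_measurable path_sigma" using X_meas s0 by auto
      have Zm'[measurable]: "Z s \<in> borel_measurable path_sigma" by (rule Zm[OF s0])
      have eqE: "(\<integral>\<^sup>+ y. ennreal (indicator \<Gamma>' y * (X s y + K)) \<partial>Q \<omega>) =
                 (\<integral>\<^sup>+ y. ennreal (indicator \<Gamma>' y * (Z s y + K)) \<partial>Q \<omega>)" if G': "\<Gamma>' \<in> Egen s" for \<Gamma>'
      proof -
        have "\<omega> \<notin> Nset s \<Gamma>'" using \<omega> G' sSq unfolding N_def by auto
        then show ?thesis using ts \<omega>\<Omega> unfolding Nset_def g1_def g2_def by auto
      qed
      have b1: "0 \<le> X s y + K \<and> X s y + K \<le> 2 * K" if "y \<in> path_space" for y
      proof -
        have "\<bar>X s y\<bar> \<le> K" using Xb s0 that by auto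
        then show ?thesis by (auto simp: abs_le_iff)
      qed
      have b2: "0 \<le> Z s y + K \<and> Z s y + K \<le> 2 * K" if "y \<in> path_space" for y
        using Zp(2)[OF s0, of y] AK by (auto simp: abs_le_iff)
      have "(\<integral> y. indicator \<Gamma> y * (X s y + K) \<partial>Q \<omega>) = (\<integral> y. indicator \<Gamma> y * (Z s y + K) \<partial>Q \<omega>)"
        by (rule ext_eq[OF Qi(2) Qi(1) s0 _ _ b1 b2 eqE G]) measurable
      also have "\<dots> \<le> (\<integral> y. indicator \<Gamma> y * (A + K) \<partial>Q \<omega>)"
      proof (rule integral_mono)
        have GQ: "\<Gamma> \<in> sets (Q \<omega>)" using G coord_filt_sub Qi(1) by auto
        have ZQ: "Z s \<in> borel_measurable (Q \<omega>)" using Zm'  measurable_cong_sets[OF Qi(1) refl] by blast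
        show "integrable (Q \<omega>) (\<lambda>y. indicator \<Gamma> y * (Z s y + K))"
          by (rule Qw.integrable_const_bound[where B="2 * K"])
             (use b2 Qi(3) GQ ZQ Kpos in \<open>auto split: split_indicator intro!: AE_I2\<close>)
        show "integrable (Q \<omega>) (\<lambda>y. indicator \<Gamma> y * (A + K))"
          by (rule Qw.integrable_const_bound[where B="\<bar>A + K\<bar>"]) (use GQ in \<open>auto split: split_indicator\<close>)
        show "\<And>y. y \<in> space (Q \<omega>) \<Longrightarrow> indicator \<Gamma> y * (Z s y + K) \<le> indicator \<Gamma> y * (A + K)"
          using Zp(2)[OF s0] by (auto split: split_indicator)
      qed
      also have "\<dots> = (A + K) * measure (Q \<omega>) \<Gamma>"
      proof -
        have "\<Gamma> \<subseteq> space (Q \<omega>)" using G Qi(3) sets.sets_into_space[OF G] by simp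
        then show ?thesis by (simp add: Int_absorb2 mult.commute)
      qed
      finally show "(\<integral> y. indicator \<Gamma> y * (X s y + K) \<partial>Q \<omega>) \<le> (A + K) * measure (Q \<omega>) \<Gamma>" .
    qed
    have H: "\<forall>\<Gamma>\<in>sets (coord_filt t). (\<integral> y. indicator \<Gamma> y * (X t y + K) \<partial>Q \<omega>) \<le> (A + K) * measure (Q \<omega>) \<Gamma>"
      by (rule limit_step[OF Qi(2) Qi(1) X_meas X_cont Xb t0 stepS])
    show "AE \<omega>' in Q \<omega>. real_cond_exp (Q \<omega>) (coord_filt t) (X t) \<omega>' \<le> A"
      by (rule final_step[OF Qi(2) Qi(1) _ _ H]) (use X_meas Xb t0 in auto)
  qed
qed

end
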